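(* Let $A=(a(i,j))_{i,j\in I}$ be a generalized Cartan matrix over $I=\{1,\dots,n\}$ and let $W^{\mathrm{spin}}=W^{\mathrm{spin}}(A)$ be the group with presentation $\langle r_1,\dots,r_n\mid r_i^8=1\ (i\in I);\ r_j^{-1}r_i^2r_j=r_i^2r_j^{2n(i,j)}\ (i\ne j);\ \underbrace{r_ir_jr_i\cdots}_{m_{ij}}=\underbrace{r_jr_ir_j\cdots}_{m_{ij}}\ (i\ne j)\rangle$. Then for all $i\ne j\in I$: (a) $[r_i^2,r_j^2]=r_j^{4n(i,j)}$ and $r_i^{4n(j,i)}=r_j^{4n(i,j)}$; (b) if $n(i,j)=n(j,i)=1$ then $r_i^4=r_j^4$, and otherwise $[r_i^2,r_j^2]=1$; (c) if $n(i,j)=0$ and $n(j,i)=1$ then $r_i^4=1$; (d) $r_jr_i^4r_j^{-1}=r_i^4$ if $n(i,j)=0$ and $r_jr_i^4r_j^{-1}=r_i^2r_j^2r_i^2r_j^2$ if $n(i,j)=1$; (e) $[r_j,r_i^4]=1$. In particular, the subgroup $\langle r_i^4\mid i\in I\rangle$ is central in $W^{\mathrm{spin}}$.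
   Context: A generalized Cartan matrix satisfies $a(i,i)=2$, $a(i,j)\in\mathbb Z_{\le0}$ for $i\neq j$, and $a(i,j)=0\iff a(j,i)=0$. For $i\ne j$: $n(i,j)=0$ if $a(i,j)$ is even and $n(i,j)=1$ if $a(i,j)$ is odd; $m_{ij}=2,3,4,6$ if $a(i,j)a(j,i)=0,1,2,3$ respectively, and $m_{ij}=0$ (no braid relation) if $a(i,j)a(j,i)\ge4$. Commutator convention $[x,y]=x^{-1}y^{-1}xy$. *)

theory Defs
  imports "HOL-Algebra.Algebra"
begin

definition gcm :: "nat set \<Rightarrow> (nat \<Rightarrow> nat \<Rightarrow> int) \<Rightarrow> bool" where
  "gcm I a \<longleftrightarrow> (\<forall>i\<in>I. a i i = 2) \<and>
     (\<forall>i\<in>I. \<forall>j\<in>I. i \<noteq> j \<longrightarrow> a i j \<le> 0) \<and>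
     (\<forall>i\<in>I. \<forall>j\<in>I. i \<noteq> j \<longrightarrow> (a i j = 0 \<longleftrightarrow> a j i = 0))"

definition npar :: "(nat \<Rightarrow> nat \<Rightarrow> int) \<Rightarrow> nat \<Rightarrow> nat \<Rightarrow> nat" where
  "npar a i j = (if even (a i j) then 0 else 1)"

text \<open>Braid exponent m_ij (0 means no braid relation).\<close>
definition mexp :: "(nat \<Rightarrow> nat \<Rightarrow> int) \<Rightarrow> nat \<Rightarrow> nat \<Rightarrow> nat" where
  "mexp a i j = (let p = a i j * a j i in
     if p = 0 then 2 else if p = 1 then 3 else if p = 2 then 4 else if p = 3 then 6 else 0)"

fun alt_word :: "('g, 'b) monoid_scheme \<Rightarrow> 'g \<Rightarrow> 'g \<Rightarrow> nat \<Rightarrow> 'g" where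
  "alt_word G x y 0 = \<one>\<^bsub>G\<^esub>"
| "alt_word G x y (Suc m) = x \<otimes>\<^bsub>G\<^esub> alt_word G y x m"

definition commutator :: "('g, 'b) monoid_scheme \<Rightarrow> 'g \<Rightarrow> 'g \<Rightarrow> 'g" where
  "commutator G x y = inv\<^bsub>G\<^esub> x \<otimes>\<^bsub>G\<^esub> inv\<^bsub>G\<^esub> y \<otimes>\<^bsub>G\<^esub> x \<otimes>\<^bsub>G\<^esub> y"

definition spin_relations :: "('g, 'b) monoid_scheme \<Rightarrow> nat set \<Rightarrow> (nat \<Rightarrow> nat \<Rightarrow> int) \<Rightarrow> (nat \<Rightarrow> 'g) \<Rightarrow> bool" where
  "spin_relations G I a r \<longleftrightarrow>
     (\<forall>i\<in>I. r i \<in> carrier G) \<and>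
     (\<forall>i\<in>I. r i [^]\<^bsub>G\<^esub> (8::nat) = \<one>\<^bsub>G\<^esub>) \<and>
     (\<forall>i\<in>I. \<forall>j\<in>I. i \<noteq> j \<longrightarrow>
        inv\<^bsub>G\<^esub> (r j) \<otimes>\<^bsub>G\<^esub> r i [^]\<^bsub>G\<^esub> (2::nat) \<otimes>\<^bsub>G\<^esub> r j
          = r i [^]\<^bsub>G\<^esub> (2::nat) \<otimes>\<^bsub>G\<^esub> r j [^]\<^bsub>G\<^esub> (2 * npar a i j)) \<and>
     (\<forall>i\<in>I. \<forall>j\<in>I. i \<noteq> j \<longrightarrow>
        alt_word G (r i) (r j) (mexp a i j) = alt_word G (r j) (r i) (mexp a i j))"

end

theory Submission
  imports Defs
begin

context group begin


lemma conj_eq: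
  assumes "a \<in> carrier G" "b \<in> carrier G" "c \<in> carrier G"
  shows "(inv a \<otimes> b \<otimes> a = c) \<longleftrightarrow> (b \<otimes> a = a \<otimes> c)"
proof
  assume "inv a \<otimes> b \<otimes> a = c"
  then have "a \<otimes> (inv a \<otimes> b \<otimes> a) = a \<otimes> c" by simp
  then show "b \<otimes> a = a \<otimes> c" using assms by (simp add: m_assoc[symmetric])
next
  assume h: "b \<otimes> a = a \<otimes> c"
  have "inv a \<otimes> b \<otimes> a = inv a \<otimes> (b \<otimes> a)" using assms by (simp add: m_assoc)
  also have "\<dots> = c" unfolding h using assms by (simp add: m_assoc[symmetric])
  finally show "inv a \<otimes> b \<otimes> a = c" .
qed

lemma tail8:
  assumes y: "y \<in> carrier G" and Y8: "y \<otimes> (y \<otimes> (y \<otimes> (y \<otimes> (y \<otimes> (y \<otimes> (y \<otimes> y)))))) = \<one>"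
  shows "z \<in> carrier G \<Longrightarrow> y \<otimes> (y \<otimes> (y \<otimes> (y \<otimes> (y \<otimes> (y \<otimes> (y \<otimes> (y \<otimes> z))))))) = z"
proof -
  assume z: "z \<in> carrier G"
  have "y \<otimes> (y \<otimes> (y \<otimes> (y \<otimes> (y \<otimes> (y \<otimes> (y \<otimes> (y \<otimes> z))))))) =
     (y \<otimes> (y \<otimes> (y \<otimes> (y \<otimes> (y \<otimes> (y \<otimes> (y \<otimes> y))))))) \<otimes> z" using y z by (simp add: m_assoc)
  then show ?thesis using Y8 z by simp
qed

lemma tail4:
  assumes y: "y \<in> carrier G" and Y4: "y \<otimes> (y \<otimes> (y \<otimes> y)) = \<one>"
  shows "z \<in> carrier G \<Longrightarrow> y \<otimes> (y \<otimes> (y \<otimes> (y \<otimes> z))) = z"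
proof -
  assume z: "z \<in> carrier G"
  have "y \<otimes> (y \<otimes> (y \<otimes> (y \<otimes> z))) = (y \<otimes> (y \<otimes> (y \<otimes> y))) \<otimes> z" using y z by (simp add: m_assoc)
  then show ?thesis using Y4 z by simp
qed

lemma inv8:
  assumes y: "y \<in> carrier G" and Y8: "y \<otimes> (y \<otimes> (y \<otimes> (y \<otimes> (y \<otimes> (y \<otimes> (y \<otimes> y)))))) = \<one>"
  shows "inv y = y \<otimes> (y \<otimes> (y \<otimes> (y \<otimes> (y \<otimes> (y \<otimes> y)))))"
  by (rule inv_equality) (use y Y8 in \<open>simp_all add: m_assoc\<close>)

lemma inv4:
  assumes y: "y \<in> carrier G" and Y4: "y \<otimes> (y \<otimes> (y \<otimes> y)) = \<one>"
  shows "inv y = y \<otimes> (y \<otimes> y)"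
  by (rule inv_equality) (use y Y4 in \<open>simp_all add: m_assoc\<close>)

lemma core1:
  assumes y: "y \<in> carrier G" and s: "s \<in> carrier G"
    and Y8: "y \<otimes> (y \<otimes> (y \<otimes> (y \<otimes> (y \<otimes> (y \<otimes> (y \<otimes> y)))))) = \<one>"
    and S4: "s \<otimes> (s \<otimes> (s \<otimes> s)) = \<one>"
    and R: "inv y \<otimes> s \<otimes> y = s \<otimes> (y \<otimes> y)"
  shows "commutator G s (y \<otimes> y) = y \<otimes> (y \<otimes> (y \<otimes> y))"
    "y \<otimes> (s \<otimes> s) \<otimes> inv y = s \<otimes> (y \<otimes> y) \<otimes> s \<otimes> (y \<otimes> y)"
    "commutator G y (s \<otimes> s) = \<one>"
proof -
  have R1: "s \<otimes> y = y \<otimes> (s \<otimes> (y \<otimes> y))" using R conj_eq y s by simp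
  have "(y \<otimes> s \<otimes> y) \<otimes> y = y \<otimes> (s \<otimes> (y \<otimes> y))" using y s by (simp add: m_assoc)
  then have "s \<otimes> y = (y \<otimes> s \<otimes> y) \<otimes> y" using R1 by simp
  then have R2: "s = y \<otimes> s \<otimes> y" using y s by simp
  have "(y \<otimes> (s \<otimes> y)) \<otimes> inv y = y \<otimes> s" using y s by (simp add: m_assoc)
  then have "s \<otimes> inv y = y \<otimes> s" using R2 y s by (metis m_assoc)
  then have ys: "y \<otimes> s = s \<otimes> (y \<otimes> (y \<otimes> (y \<otimes> (y \<otimes> (y \<otimes> (y \<otimes> y))))))"
    using inv8[OF y Y8] by simp
  have ysz: "y \<otimes> (s \<otimes> z) = s \<otimes> (y \<otimes> (y \<otimes> (y \<otimes> (y \<otimes> (y \<otimes> (y \<otimes> (y \<otimes> z)))))))" if z: "z \<in> carrier G" for z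
  proof -
    have "y \<otimes> (s \<otimes> z) = (y \<otimes> s) \<otimes> z" using y s z by (simp add: m_assoc)
    then show ?thesis unfolding ys using y s z by (simp add: m_assoc)
  qed
  note rules = m_assoc inv8[OF y Y8] inv4[OF s S4] inv_mult_group tail8[OF y Y8] tail4[OF s S4] ysz ys Y8 S4
  show "commutator G s (y \<otimes> y) = y \<otimes> (y \<otimes> (y \<otimes> y))"
    unfolding commutator_def using y s by (simp add: rules)
  show "y \<otimes> (s \<otimes> s) \<otimes> inv y = s \<otimes> (y \<otimes> y) \<otimes> s \<otimes> (y \<otimes> y)"
    using y s by (simp add: rules)
  show "commutator G y (s \<otimes> s) = \<one>"
    unfolding commutator_def using y s by (simp add: rules)
qed

lemma core0:
  assumes y: "y \<in> carrier G" and s: "s \<in> carrier G"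
    and Y8: "y \<otimes> (y \<otimes> (y \<otimes> (y \<otimes> (y \<otimes> (y \<otimes> (y \<otimes> y)))))) = \<one>"
    and S4: "s \<otimes> (s \<otimes> (s \<otimes> s)) = \<one>"
    and R: "inv y \<otimes> s \<otimes> y = s"
  shows "commutator G s (y \<otimes> y) = \<one>"
    "y \<otimes> (s \<otimes> s) \<otimes> inv y = s \<otimes> s"
    "commutator G y (s \<otimes> s) = \<one>"
proof -
  have ys: "y \<otimes> s = s \<otimes> y" using R conj_eq y s by simp
  have ysz: "y \<otimes> (s \<otimes> z) = s \<otimes> (y \<otimes> z)" if z: "z \<in> carrier G" for z
  proof -
    have "y \<otimes> (s \<otimes> z) = (y \<otimes> s) \<otimes> z" using y s z by (simp add: m_assoc)
    then show ?thesis unfolding ys using y s z by (simp add: m_assoc)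
  qed
  note rules = m_assoc inv8[OF y Y8] inv4[OF s S4] inv_mult_group tail8[OF y Y8] tail4[OF s S4] ysz ys Y8 S4
  show "commutator G s (y \<otimes> y) = \<one>"
    unfolding commutator_def using y s by (simp add: rules)
  show "y \<otimes> (s \<otimes> s) \<otimes> inv y = s \<otimes> s"
    using y s by (simp add: rules)
  show "commutator G y (s \<otimes> s) = \<one>"
    unfolding commutator_def using y s by (simp add: rules)
qed

lemma canc1: "x \<in> carrier G \<Longrightarrow> z \<in> carrier G \<Longrightarrow> x \<otimes> (inv x \<otimes> z) = z"
  by (simp add: m_assoc[symmetric])
lemma canc2: "x \<in> carrier G \<Longrightarrow> z \<in> carrier G \<Longrightarrow> inv x \<otimes> (x \<otimes> z) = z"
  by (simp add: m_assoc[symmetric])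

lemma comm_inv:
  assumes "a \<in> carrier G" "b \<in> carrier G"
  shows "commutator G a b = inv (commutator G b a)"
  unfolding commutator_def using assms by (simp add: m_assoc inv_mult_group)

lemma comm_one_commute:
  assumes a: "a \<in> carrier G" and b: "b \<in> carrier G" and c: "commutator G a b = \<one>"
  shows "a \<otimes> b = b \<otimes> a"
proof -
  have "b \<otimes> a \<otimes> commutator G a b = a \<otimes> b"
    unfolding commutator_def using a b by (simp add: m_assoc canc1 canc2)
  then show ?thesis using c a b by simp
qed

lemma commute_generate:
  assumes a: "a \<in> carrier G" and H: "H \<subseteq> carrier G"
    and c: "\<And>h. h \<in> H \<Longrightarrow> a \<otimes> h = h \<otimes> a"
    and w: "w \<in> generate G H"
  shows "a \<otimes> w = w \<otimes> a"
  using w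
proof (induction rule: generate.induct)
  case one
  then show ?case using a by simp
next
  case (incl h)
  then show ?case using c by simp
next
  case (inv h)
  have h: "h \<in> carrier G" using inv H by auto
  have e: "a \<otimes> h = h \<otimes> a" using c inv by simp
  have "inv h \<otimes> (a \<otimes> h) \<otimes> inv h = inv h \<otimes> (h \<otimes> a) \<otimes> inv h" using e by simp
  then show ?case using a h by (simp add: m_assoc canc1 canc2)
next
  case (eng h1 h2)
  have h1: "h1 \<in> carrier G" and h2: "h2 \<in> carrier G"
    using eng.hyps generate_incl[OF H] by auto
  have "a \<otimes> (h1 \<otimes> h2) = (a \<otimes> h1) \<otimes> h2" using a h1 h2 by (simp add: m_assoc)
  also have "\<dots> = h1 \<otimes> (a \<otimes> h2)" using eng.IH a h1 h2 by (simp add: m_assoc)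
  also have "\<dots> = h1 \<otimes> h2 \<otimes> a" using eng.IH a h1 h2 by (simp add: m_assoc)
  finally show ?case .
qed

lemma inv_p4:
  assumes x: "x \<in> carrier G" and X8: "x \<otimes> (x \<otimes> (x \<otimes> (x \<otimes> (x \<otimes> (x \<otimes> (x \<otimes> x)))))) = \<one>"
  shows "inv (x \<otimes> (x \<otimes> (x \<otimes> x))) = x \<otimes> (x \<otimes> (x \<otimes> x))"
  by (rule inv_equality) (use x X8 in \<open>simp_all add: m_assoc\<close>)

lemma pair:
  fixes x y :: 'a and n m :: nat
  assumes x: "x \<in> carrier G" and y: "y \<in> carrier G"
    and x8: "x [^] (8::nat) = \<one>" and y8: "y [^] (8::nat) = \<one>"
    and n: "n = 0 \<or> n = 1" and m: "m = 0 \<or> m = 1"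
    and Rij: "inv y \<otimes> x [^] (2::nat) \<otimes> y = x [^] (2::nat) \<otimes> y [^] (2 * n)"
    and Rji: "inv x \<otimes> y [^] (2::nat) \<otimes> x = y [^] (2::nat) \<otimes> x [^] (2 * m)"
  shows "commutator G (x [^] (2::nat)) (y [^] (2::nat)) = y [^] (4 * n)
      \<and> x [^] (4 * m) = y [^] (4 * n)
      \<and> (if n = 1 \<and> m = 1
          then x [^] (4::nat) = y [^] (4::nat)
          else commutator G (x [^] (2::nat)) (y [^] (2::nat)) = \<one>)
      \<and> (n = 0 \<and> m = 1 \<longrightarrow> x [^] (4::nat) = \<one>)
      \<and> (n = 0 \<longrightarrow> y \<otimes> x [^] (4::nat) \<otimes> inv y = x [^] (4::nat))
      \<and> (n = 1 \<longrightarrow>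
          y \<otimes> x [^] (4::nat) \<otimes> inv y
            = x [^] (2::nat) \<otimes> y [^] (2::nat) \<otimes> x [^] (2::nat) \<otimes> y [^] (2::nat))
      \<and> commutator G y (x [^] (4::nat)) = \<one>"
proof -
  have X8: "x \<otimes> (x \<otimes> (x \<otimes> (x \<otimes> (x \<otimes> (x \<otimes> (x \<otimes> x)))))) = \<one>"
    using x8 x by (simp add: numeral_eq_Suc m_assoc)
  have Y8: "y \<otimes> (y \<otimes> (y \<otimes> (y \<otimes> (y \<otimes> (y \<otimes> (y \<otimes> y)))))) = \<one>"
    using y8 y by (simp add: numeral_eq_Suc m_assoc)
  have S4: "(x \<otimes> x) \<otimes> ((x \<otimes> x) \<otimes> ((x \<otimes> x) \<otimes> (x \<otimes> x))) = \<one>"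
    using X8 x by (simp add: m_assoc)
  have T4: "(y \<otimes> y) \<otimes> ((y \<otimes> y) \<otimes> ((y \<otimes> y) \<otimes> (y \<otimes> y))) = \<one>"
    using Y8 y by (simp add: m_assoc)
  have xx: "x \<otimes> x \<in> carrier G" and yy: "y \<otimes> y \<in> carrier G" using x y by auto
  note ix = inv_p4[OF x X8] and iy = inv_p4[OF y Y8]
  note cinv = comm_inv[OF xx yy]
  from n m show ?thesis
  proof (elim disjE)
    assume n0: "n = 0" and m0: "m = 0"
    have r1: "inv y \<otimes> (x \<otimes> x) \<otimes> y = x \<otimes> x" using Rij n0 x y by (simp add: numeral_eq_Suc m_assoc)
    have r2: "inv x \<otimes> (y \<otimes> y) \<otimes> x = y \<otimes> y" using Rji m0 x y by (simp add: numeral_eq_Suc m_assoc)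
    note c = core0[OF y xx Y8 S4 r1] and d = core0[OF x yy X8 T4 r2]
    have h1: "commutator G (x [^] (2::nat)) (y [^] (2::nat)) = \<one>" using c(1) x y by (simp add: numeral_eq_Suc m_assoc)
    have h2: "True" by simp
    have h6: "y \<otimes> x [^] (4::nat) \<otimes> inv y = x [^] (4::nat)" using c(2) x y by (simp add: numeral_eq_Suc m_assoc)
    have h7: "commutator G y (x [^] (4::nat)) = \<one>" using c(3) x y by (simp add: numeral_eq_Suc m_assoc)
    show ?thesis using h1 h2 h6 h7 n0 m0 by simp
  next
    assume n0: "n = 0" and m1: "m = 1"
    have r1: "inv y \<otimes> (x \<otimes> x) \<otimes> y = x \<otimes> x" using Rij n0 x y by (simp add: numeral_eq_Suc m_assoc)
    have r2: "inv x \<otimes> (y \<otimes> y) \<otimes> x = (y \<otimes> y) \<otimes> (x \<otimes> x)" using Rji m1 x y by (simp add: numeral_eq_Suc m_assoc)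
    note c = core0[OF y xx Y8 S4 r1] and d = core1[OF x yy X8 T4 r2]
    have "inv (x \<otimes> (x \<otimes> (x \<otimes> x))) = \<one>" using cinv c(1) d(1) x y by simp
    then have k: "x \<otimes> (x \<otimes> (x \<otimes> x)) = \<one>" using x by (simp add: inv_eq_1_iff)
    have h1: "commutator G (x [^] (2::nat)) (y [^] (2::nat)) = \<one>" using c(1) x y by (simp add: numeral_eq_Suc m_assoc)
    have h2: "x [^] (4::nat) = \<one>" using k x y by (simp add: numeral_eq_Suc m_assoc)
    have h6: "y \<otimes> x [^] (4::nat) \<otimes> inv y = x [^] (4::nat)" using c(2) x y by (simp add: numeral_eq_Suc m_assoc)
    have h7: "commutator G y (x [^] (4::nat)) = \<one>" using c(3) x y by (simp add: numeral_eq_Suc m_assoc)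
    show ?thesis using h1 h2 h6 h7 n0 m1 by simp
  next
    assume n1: "n = 1" and m0: "m = 0"
    have r1: "inv y \<otimes> (x \<otimes> x) \<otimes> y = (x \<otimes> x) \<otimes> (y \<otimes> y)" using Rij n1 x y by (simp add: numeral_eq_Suc m_assoc)
    have r2: "inv x \<otimes> (y \<otimes> y) \<otimes> x = y \<otimes> y" using Rji m0 x y by (simp add: numeral_eq_Suc m_assoc)
    note c = core1[OF y xx Y8 S4 r1] and d = core0[OF x yy X8 T4 r2]
    have "inv (y \<otimes> (y \<otimes> (y \<otimes> y))) = \<one>" using cinv c(1) d(1) x y by simp
    then have k: "y \<otimes> (y \<otimes> (y \<otimes> y)) = \<one>" using y by (simp add: inv_eq_1_iff)
    have h1: "commutator G (x [^] (2::nat)) (y [^] (2::nat)) = y [^] (4::nat)" using c(1) x y by (simp add: numeral_eq_Suc m_assoc)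
    have h2: "y [^] (4::nat) = \<one>" using k x y by (simp add: numeral_eq_Suc m_assoc)
    have h6: "y \<otimes> x [^] (4::nat) \<otimes> inv y = x [^] (2::nat) \<otimes> y [^] (2::nat) \<otimes> x [^] (2::nat) \<otimes> y [^] (2::nat)" using c(2) x y by (simp add: numeral_eq_Suc m_assoc)
    have h7: "commutator G y (x [^] (4::nat)) = \<one>" using c(3) x y by (simp add: numeral_eq_Suc m_assoc)
    show ?thesis using h1 h2 h6 h7 n1 m0 by simp
  next
    assume n1: "n = 1" and m1: "m = 1"
    have r1: "inv y \<otimes> (x \<otimes> x) \<otimes> y = (x \<otimes> x) \<otimes> (y \<otimes> y)" using Rij n1 x y by (simp add: numeral_eq_Suc m_assoc)
    have r2: "inv x \<otimes> (y \<otimes> y) \<otimes> x = (y \<otimes> y) \<otimes> (x \<otimes> x)" using Rji m1 x y by (simp add: numeral_eq_Suc m_assoc)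
    note c = core1[OF y xx Y8 S4 r1] and d = core1[OF x yy X8 T4 r2]
    have k: "x \<otimes> (x \<otimes> (x \<otimes> x)) = y \<otimes> (y \<otimes> (y \<otimes> y))" using cinv c(1) d(1) ix x y by simp
    have h1: "commutator G (x [^] (2::nat)) (y [^] (2::nat)) = y [^] (4::nat)" using c(1) x y by (simp add: numeral_eq_Suc m_assoc)
    have h2: "x [^] (4::nat) = y [^] (4::nat)" using k x y by (simp add: numeral_eq_Suc m_assoc)
    have h6: "y \<otimes> x [^] (4::nat) \<otimes> inv y = x [^] (2::nat) \<otimes> y [^] (2::nat) \<otimes> x [^] (2::nat) \<otimes> y [^] (2::nat)" using c(2) x y by (simp add: numeral_eq_Suc m_assoc)
    have h7: "commutator G y (x [^] (4::nat)) = \<one>" using c(3) x y by (simp add: numeral_eq_Suc m_assoc)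
    show ?thesis using h1 h2 h6 h7 n1 m1 by simp
  qed
qed
end


theorem mainTheorem17:
  fixes G :: "('g, 'b) monoid_scheme" and n :: nat and a :: "nat \<Rightarrow> nat \<Rightarrow> int"
    and r :: "nat \<Rightarrow> 'g"
  assumes "group G"
    and "gcm {1..n} a"
    and "spin_relations G {1..n} a r"
  shows "(\<forall>i\<in>{1..n}. \<forall>j\<in>{1..n}. i \<noteq> j \<longrightarrow>
      commutator G (r i [^]\<^bsub>G\<^esub> (2::nat)) (r j [^]\<^bsub>G\<^esub> (2::nat))
        = r j [^]\<^bsub>G\<^esub> (4 * npar a i j)
      \<and> r i [^]\<^bsub>G\<^esub> (4 * npar a j i) = r j [^]\<^bsub>G\<^esub> (4 * npar a i j)
      \<and> (if npar a i j = 1 \<and> npar a j i = 1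
          then r i [^]\<^bsub>G\<^esub> (4::nat) = r j [^]\<^bsub>G\<^esub> (4::nat)
          else commutator G (r i [^]\<^bsub>G\<^esub> (2::nat)) (r j [^]\<^bsub>G\<^esub> (2::nat)) = \<one>\<^bsub>G\<^esub>)
      \<and> (npar a i j = 0 \<and> npar a j i = 1 \<longrightarrow> r i [^]\<^bsub>G\<^esub> (4::nat) = \<one>\<^bsub>G\<^esub>)
      \<and> (npar a i j = 0 \<longrightarrow>
          r j \<otimes>\<^bsub>G\<^esub> r i [^]\<^bsub>G\<^esub> (4::nat) \<otimes>\<^bsub>G\<^esub> inv\<^bsub>G\<^esub> (r j) = r i [^]\<^bsub>G\<^esub> (4::nat))
      \<and> (npar a i j = 1 \<longrightarrow>
          r j \<otimes>\<^bsub>G\<^esub> r i [^]\<^bsub>G\<^esub> (4::nat) \<otimes>\<^bsub>G\<^esub> inv\<^bsub>G\<^esub> (r j)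
            = r i [^]\<^bsub>G\<^esub> (2::nat) \<otimes>\<^bsub>G\<^esub> r j [^]\<^bsub>G\<^esub> (2::nat)
              \<otimes>\<^bsub>G\<^esub> r i [^]\<^bsub>G\<^esub> (2::nat) \<otimes>\<^bsub>G\<^esub> r j [^]\<^bsub>G\<^esub> (2::nat))
      \<and> commutator G (r j) (r i [^]\<^bsub>G\<^esub> (4::nat)) = \<one>\<^bsub>G\<^esub>)
    \<and> (\<forall>z\<in>generate G ((\<lambda>i. r i [^]\<^bsub>G\<^esub> (4::nat)) ` {1..n}).
         \<forall>x\<in>generate G (r ` {1..n}). z \<otimes>\<^bsub>G\<^esub> x = x \<otimes>\<^bsub>G\<^esub> z)"
  proof -
  interpret group G by fact
  have rc: "\<And>i. i \<in> {1..n} \<Longrightarrow> r i \<in> carrier G"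
    and r8: "\<And>i. i \<in> {1..n} \<Longrightarrow> r i [^]\<^bsub>G\<^esub> (8::nat) = \<one>\<^bsub>G\<^esub>"
    and rel: "\<And>i j. i \<in> {1..n} \<Longrightarrow> j \<in> {1..n} \<Longrightarrow> i \<noteq> j \<Longrightarrow>
        inv\<^bsub>G\<^esub> (r j) \<otimes>\<^bsub>G\<^esub> r i [^]\<^bsub>G\<^esub> (2::nat) \<otimes>\<^bsub>G\<^esub> r j = r i [^]\<^bsub>G\<^esub> (2::nat) \<otimes>\<^bsub>G\<^esub> r j [^]\<^bsub>G\<^esub> (2 * npar a i j)"
    using assms(3) unfolding spin_relations_def by auto
  have np: "\<And>i j. npar a i j = 0 \<or> npar a i j = 1" unfolding npar_def by simp
  have P: "\<forall>i\<in>{1..n}. \<forall>j\<in>{1..n}. i \<noteq> j \<longrightarrow>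
      commutator G (r i [^]\<^bsub>G\<^esub> (2::nat)) (r j [^]\<^bsub>G\<^esub> (2::nat))
        = r j [^]\<^bsub>G\<^esub> (4 * npar a i j)
      \<and> r i [^]\<^bsub>G\<^esub> (4 * npar a j i) = r j [^]\<^bsub>G\<^esub> (4 * npar a i j)
      \<and> (if npar a i j = 1 \<and> npar a j i = 1
          then r i [^]\<^bsub>G\<^esub> (4::nat) = r j [^]\<^bsub>G\<^esub> (4::nat)
          else commutator G (r i [^]\<^bsub>G\<^esub> (2::nat)) (r j [^]\<^bsub>G\<^esub> (2::nat)) = \<one>\<^bsub>G\<^esub>)
      \<and> (npar a i j = 0 \<and> npar a j i = 1 \<longrightarrow> r i [^]\<^bsub>G\<^esub> (4::nat) = \<one>\<^bsub>G\<^esub>)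
      \<and> (npar a i j = 0 \<longrightarrow>
          r j \<otimes>\<^bsub>G\<^esub> r i [^]\<^bsub>G\<^esub> (4::nat) \<otimes>\<^bsub>G\<^esub> inv\<^bsub>G\<^esub> (r j) = r i [^]\<^bsub>G\<^esub> (4::nat))
      \<and> (npar a i j = 1 \<longrightarrow>
          r j \<otimes>\<^bsub>G\<^esub> r i [^]\<^bsub>G\<^esub> (4::nat) \<otimes>\<^bsub>G\<^esub> inv\<^bsub>G\<^esub> (r j)
            = r i [^]\<^bsub>G\<^esub> (2::nat) \<otimes>\<^bsub>G\<^esub> r j [^]\<^bsub>G\<^esub> (2::nat)
              \<otimes>\<^bsub>G\<^esub> r i [^]\<^bsub>G\<^esub> (2::nat) \<otimes>\<^bsub>G\<^esub> r j [^]\<^bsub>G\<^esub> (2::nat))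
      \<and> commutator G (r j) (r i [^]\<^bsub>G\<^esub> (4::nat)) = \<one>\<^bsub>G\<^esub>"
    apply (intro ballI impI)
    subgoal for i j by (rule pair[OF rc rc r8 r8 np np rel rel]) auto
    done
  have C: "\<forall>z\<in>generate G ((\<lambda>i. r i [^]\<^bsub>G\<^esub> (4::nat)) ` {1..n}).
         \<forall>x\<in>generate G (r ` {1..n}). z \<otimes>\<^bsub>G\<^esub> x = x \<otimes>\<^bsub>G\<^esub> z"
  proof (intro ballI)
    fix z w assume z: "z \<in> generate G ((\<lambda>i. r i [^]\<^bsub>G\<^esub> (4::nat)) ` {1..n})"
      and w: "w \<in> generate G (r ` {1..n})"
    have Hc: "r ` {1..n} \<subseteq> carrier G" using rc by auto
    have Kc: "(\<lambda>i. r i [^]\<^bsub>G\<^esub> (4::nat)) ` {1..n} \<subseteq> carrier G" using rc by auto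
    have wc: "w \<in> carrier G" using generate_incl[OF Hc] w by auto
    have gen: "r i [^]\<^bsub>G\<^esub> (4::nat) \<otimes>\<^bsub>G\<^esub> w = w \<otimes>\<^bsub>G\<^esub> r i [^]\<^bsub>G\<^esub> (4::nat)"
      if i: "i \<in> {1..n}" for i
    proof (rule commute_generate[OF _ Hc _ w])
      show "r i [^]\<^bsub>G\<^esub> (4::nat) \<in> carrier G" using rc[OF i] by simp
      fix h assume "h \<in> r ` {1..n}"
      then obtain k where k: "k \<in> {1..n}" and hk: "h = r k" by auto
      show "r i [^]\<^bsub>G\<^esub> (4::nat) \<otimes>\<^bsub>G\<^esub> h = h \<otimes>\<^bsub>G\<^esub> r i [^]\<^bsub>G\<^esub> (4::nat)"
      proof (cases "k = i")
        case True
        then show ?thesis using hk rc[OF i] by (simp add: numeral_eq_Suc m_assoc)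
      next
        case False
        have "commutator G (r k) (r i [^]\<^bsub>G\<^esub> (4::nat)) = \<one>\<^bsub>G\<^esub>" using P[rule_format, OF i k not_sym[OF False]] by blast
        then have "r k \<otimes>\<^bsub>G\<^esub> r i [^]\<^bsub>G\<^esub> (4::nat) = r i [^]\<^bsub>G\<^esub> (4::nat) \<otimes>\<^bsub>G\<^esub> r k"
          using rc[OF i] rc[OF k] by (intro comm_one_commute) auto
        then show ?thesis using hk by simp
      qed
    qed
    have "w \<otimes>\<^bsub>G\<^esub> z = z \<otimes>\<^bsub>G\<^esub> w"
    proof (rule commute_generate[OF wc Kc _ z])
      fix h assume "h \<in> (\<lambda>i. r i [^]\<^bsub>G\<^esub> (4::nat)) ` {1..n}"
      then obtain i where i: "i \<in> {1..n}" and hi: "h = r i [^]\<^bsub>G\<^esub> (4::nat)" by blast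
      show "w \<otimes>\<^bsub>G\<^esub> h = h \<otimes>\<^bsub>G\<^esub> w" using gen[OF i] hi by simp
    qed
    then show "z \<otimes>\<^bsub>G\<^esub> w = w \<otimes>\<^bsub>G\<^esub> z" by simp
  qed
  show ?thesis using P C by (rule conjI)
qed

end
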